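(* Let $m,q\ge1$, and let $r$ be a uniformly random seed. For any distributions $\mu_1,\dots,\mu_m\in\Delta_q$, $$\mathbb P_r\big[\exists i,j\in[m]:\ \mathrm{MinCoupler}(\mu_i,r)\ne\mathrm{MinCoupler}(\mu_j,r)\big]\le\frac{\sum_{x\in[q]}\big(\max_{i\in[m]}\mu_i(x)-\min_{i\in[m]}\mu_i(x)\big)}{\sum_{x\in[q]}\max_{i\in[m]}\mu_i(x)}.$$
   Context: $\Delta_q=\{\nu\in[0,1]^q:\sum_x\nu(x)=1\}$. The random seed $r$ is an infinite sequence of i.i.d. pairs $(x_1,p_1),(x_2,p_2),\dots$ with $x_k$ uniform on $[q]$ and $p_k$ uniform on $[0,1]$, independent. $\mathrm{MinCoupler}(\nu,r)$ outputs $x_{i^*}$, where $i^*=\min\{k\ge1: p_k\le\nu(x_k)\}$. *)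

theory Defs
  imports "HOL-Probability.Probability"
begin

text \<open>[q] is rendered as {0..<q}. A distribution on [q] is a function nat => real,
  with values in [0,1] on [q], zero outside [q], summing to 1 over [q].\<close>
definition prob_simplex :: "nat \<Rightarrow> (nat \<Rightarrow> real) set" where
  "prob_simplex q = {\<nu>. (\<forall>x<q. 0 \<le> \<nu> x \<and> \<nu> x \<le> 1) \<and> (\<forall>x\<ge>q. \<nu> x = 0) \<and> (\<Sum>x<q. \<nu> x) = 1}"

definition seed_pair_measure :: "nat \<Rightarrow> (nat \<times> real) measure" where
  "seed_pair_measure q = uniform_count_measure {0..<q} \<Otimes>\<^sub>M uniform_measure lborel {0..1}"

text \<open>The random seed r = ((x_1,p_1),(x_2,p_2),...) as an i.i.d. sequence, indexed from 0.\<close>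
definition seed_measure :: "nat \<Rightarrow> (nat \<Rightarrow> nat \<times> real) measure" where
  "seed_measure q = (\<Pi>\<^sub>M k\<in>(UNIV::nat set). seed_pair_measure q)"

text \<open>MinCoupler(nu, r) = x_{i*}, i* = least k with p_k <= nu(x_k).
  (If no such k exists -- a null event -- the output is unspecified.)\<close>
definition MinCoupler :: "(nat \<Rightarrow> real) \<Rightarrow> (nat \<Rightarrow> nat \<times> real) \<Rightarrow> nat" where
  "MinCoupler \<nu> r = fst (r (LEAST k. snd (r k) \<le> \<nu> (fst (r k))))"

end

theory Submission
  imports Defs
begin


lemma prob_S: "q \<ge> 1 \<Longrightarrow> prob_space (seed_pair_measure q)"
  unfolding seed_pair_measure_def
  apply (rule prob_space_pair)
   apply (rule prob_space_uniform_count_measure) apply auto[2]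
  apply (rule prob_space_uniform_measure) apply auto
  done

lemma sets_seed_Sigma:
  assumes f: "\<And>x. x<q \<Longrightarrow> f x \<in> sets borel"
  shows "Sigma {0..<q} f \<in> sets (seed_pair_measure q)"
proof -
  have eq: "Sigma {0..<q} f = (\<Union>x\<in>{0..<q}. {x} \<times> f x)" by auto
  show ?thesis unfolding eq seed_pair_measure_def
    using f by (intro sets.finite_UN ballI pair_measureI) (auto simp: sets_uniform_count_measure)
qed

lemma emeasure_seed_Sigma:
  assumes q: "q \<ge> 1" and f: "\<And>x. x<q \<Longrightarrow> f x \<in> sets borel"
    and g: "\<And>x. x<q \<Longrightarrow> emeasure lborel ({0..1} \<inter> f x) = ennreal (g x)"
    and g0: "\<And>x. x<q \<Longrightarrow> 0 \<le> g x"
  shows "emeasure (seed_pair_measure q) (Sigma {0..<q} f) = ennreal ((\<Sum>x<q. g x)/q)"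
proof -
  interpret U: prob_space "uniform_measure lborel {0..1::real}"
    by (rule prob_space_uniform_measure) auto
  have eq: "Sigma {0..<q} f = (\<Union>x\<in>{0..<q}. {x} \<times> f x)" by auto
  have "emeasure (seed_pair_measure q) (Sigma {0..<q} f)
      = (\<Sum>x\<in>{0..<q}. emeasure (seed_pair_measure q) ({x} \<times> f x))"
    unfolding eq using f
    by (intro sum_emeasure[symmetric]) (auto simp: seed_pair_measure_def disjoint_family_on_def sets_uniform_count_measure intro!: pair_measureI)
  also have "\<dots> = (\<Sum>x\<in>{0..<q}. ennreal (g x/q))"
  proof (rule sum.cong[OF refl])
    fix x assume x: "x \<in> {0..<q}"
    have "emeasure (seed_pair_measure q) ({x} \<times> f x) =
      emeasure (uniform_count_measure {0..<q}) {x} * emeasure (uniform_measure lborel {0..1::real}) (f x)"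
      unfolding seed_pair_measure_def
      by (rule U.emeasure_pair_measure_Times) (use x f in \<open>auto simp: sets_uniform_count_measure\<close>)
    also have "emeasure (uniform_count_measure {0..<q}) {x} = ennreal (1/q)"
      using x by (simp add: emeasure_uniform_count_measure ennreal_of_nat_eq_real_of_nat divide_ennreal)
    also have "emeasure (uniform_measure lborel {0..1::real}) (f x) = ennreal (g x)"
      using g[of x] f[of x] x by (simp add: divide_ennreal_def)
    finally show "emeasure (seed_pair_measure q) ({x} \<times> f x) = ennreal (g x/q)"
      using g0[of x] x by (simp add: ennreal_mult[symmetric])
  qed
  also have "\<dots> = ennreal ((\<Sum>x<q. g x)/q)"
    using g0 by (subst sum_ennreal) (auto simp: sum_divide_distrib atLeast0LessThan)
  finally show ?thesis .
qed



lemma MinCoupler_meas: "MinCoupler \<nu> \<in> measurable (seed_measure q) (count_space UNIV)"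
proof -
  have comp: "(\<lambda>r. r k) \<in> measurable (seed_measure q) (seed_pair_measure q)" for k
    unfolding seed_measure_def by (rule measurable_component_singleton) simp
  have fstm: "(\<lambda>r. fst (r k)) \<in> measurable (seed_measure q) (count_space UNIV)" for k
  proof -
    have "fst \<in> measurable (seed_pair_measure q) (count_space UNIV)"
      unfolding seed_pair_measure_def
      by (rule measurable_compose[OF measurable_fst]) (simp add: measurable_cong_sets[OF sets_uniform_count_measure_count_space refl])
    then show ?thesis by (rule measurable_compose[OF comp])
  qed
  have nu: "(\<lambda>r. \<nu> (fst (r k))) \<in> borel_measurable (seed_measure q)" for k
    by (rule measurable_compose[OF fstm]) simp
  have sndm: "(\<lambda>r. snd (r k)) \<in> borel_measurable (seed_measure q)" for k
  proof -
    have "snd \<in> borel_measurable (seed_pair_measure q)"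
      unfolding seed_pair_measure_def
      by (rule measurable_compose[OF measurable_snd]) (simp add: measurable_cong_sets[OF sets_uniform_measure refl])
    then show ?thesis by (rule measurable_compose[OF comp])
  qed
  have L: "(\<lambda>r. LEAST k. snd (r k) \<le> \<nu> (fst (r k))) \<in> measurable (seed_measure q) (count_space UNIV)"
    by (rule measurable_Least) (simp add: pred_def borel_measurable_le[OF sndm nu])
  show ?thesis
    unfolding MinCoupler_def
    by (rule measurable_compose_countable'[where I=UNIV, OF fstm L]) auto
qed

lemma pred_neq_count:
  assumes f: "f \<in> measurable M (count_space (UNIV::nat set))" and g: "g \<in> measurable M (count_space (UNIV::nat set))"
  shows "{x\<in>space M. f x \<noteq> g x} \<in> sets M"
proof -
  have "{x\<in>space M. f x \<noteq> g x} = (\<Union>a. (f -` {a} \<inter> space M) \<inter> (space M - (g -` {a} \<inter> space M)))" by auto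
  moreover have "(\<Union>a. (f -` {a} \<inter> space M) \<inter> (space M - (g -` {a} \<inter> space M))) \<in> sets M"
    using measurable_sets[OF f, of "{_}"] measurable_sets[OF g, of "{_}"]
    by (intro sets.countable_UN) auto
  ultimately show ?thesis by simp
qed

lemma bad_meas: fixes m :: nat shows "{r \<in> space (seed_measure q).
            \<exists>i<m. \<exists>j<m. MinCoupler (\<mu> i) r \<noteq> MinCoupler (\<mu> j) r} \<in> sets (seed_measure q)"
proof -
  have "{r \<in> space (seed_measure q). \<exists>i<m. \<exists>j<m. MinCoupler (\<mu> i) r \<noteq> MinCoupler (\<mu> j) r}
    = (\<Union>i<m. \<Union>j<m. {r \<in> space (seed_measure q). MinCoupler (\<mu> i) r \<noteq> MinCoupler (\<mu> j) r})" by auto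
  also have "\<dots> \<in> sets (seed_measure q)"
    by (intro sets.finite_UN pred_neq_count MinCoupler_meas ballI) auto
  finally show ?thesis .
qed



lemma mem_Sigma_iff': "p \<in> Sigma X F \<longleftrightarrow> fst p \<in> X \<and> snd p \<in> F (fst p)"
  by (cases p) auto

theorem lemma2p9:
  fixes m q :: nat and \<mu> :: "nat \<Rightarrow> nat \<Rightarrow> real"
  assumes "m \<ge> 1" and "q \<ge> 1"
    and "\<And>i. i < m \<Longrightarrow> \<mu> i \<in> prob_simplex q"
  shows "{r \<in> space (seed_measure q).
            \<exists>i<m. \<exists>j<m. MinCoupler (\<mu> i) r \<noteq> MinCoupler (\<mu> j) r} \<in> sets (seed_measure q)
    \<and> measure (seed_measure q)
        {r \<in> space (seed_measure q).
            \<exists>i<m. \<exists>j<m. MinCoupler (\<mu> i) r \<noteq> MinCoupler (\<mu> j) r}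
      \<le> (\<Sum>x<q. Max ((\<lambda>i. \<mu> i x) ` {..<m}) - Min ((\<lambda>i. \<mu> i x) ` {..<m}))
         / (\<Sum>x<q. Max ((\<lambda>i. \<mu> i x) ` {..<m}))"
proof -
  note m = assms(1) and q = assms(2) and mu = assms(3)
  let ?S = "seed_pair_measure q"
  let ?P = "seed_measure q"
  define Mx where "Mx x = Max ((\<lambda>i. \<mu> i x) ` {..<m})" for x
  define mx where "mx x = Min ((\<lambda>i. \<mu> i x) ` {..<m})" for x
  define bad where "bad = {r \<in> space (seed_measure q).
            \<exists>i<m. \<exists>j<m. MinCoupler (\<mu> i) r \<noteq> MinCoupler (\<mu> j) r}"
  have bad_sets: "bad \<in> sets ?P" unfolding bad_def by (rule bad_meas)
  have mu01: "0 \<le> \<mu> i x \<and> \<mu> i x \<le> 1" if "x<q" "i<m" for x i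
    using mu[OF that(2)] that(1) by (auto simp: prob_simplex_def)
  have bounds: "0 \<le> mx x \<and> mx x \<le> \<mu> i x \<and> \<mu> i x \<le> Mx x \<and> Mx x \<le> 1" if x: "x<q" and i: "i<m" for x i
  proof -
    have fin: "finite ((\<lambda>i. \<mu> i x) ` {..<m})" and ne: "(\<lambda>i. \<mu> i x) ` {..<m} \<noteq> {}"
      using i by auto
    show ?thesis unfolding Mx_def mx_def
      using i mu01[OF x] fin ne
      by (auto simp: Min_ge_iff Max_le_iff intro!: Min_le Max_ge)
  qed
  have sumM1: "1 \<le> (\<Sum>x<q. Mx x)"
  proof -
    have "1 = (\<Sum>x<q. \<mu> 0 x)" using mu[of 0] m by (simp add: prob_simplex_def)
    also have "\<dots> \<le> (\<Sum>x<q. Mx x)" using bounds m by (intro sum_mono) auto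
    finally show ?thesis .
  qed
  have sumMq: "(\<Sum>x<q. Mx x) \<le> q"
  proof -
    have "(\<Sum>x<q. Mx x) \<le> (\<Sum>x<q. 1)" using bounds m by (intro sum_mono) auto
    then show ?thesis by simp
  qed
  define \<alpha> where "\<alpha> = 1 - (\<Sum>x<q. Mx x) / q"
  define \<beta> where "\<beta> = (\<Sum>x<q. Mx x - mx x) / q"
  have qpos: "real q > 0" using q by simp
  have \<alpha>0: "0 \<le> \<alpha>" using sumMq qpos unfolding \<alpha>_def by (simp add: field_simps)
  have \<alpha>1: "\<alpha> < 1" using sumM1 qpos unfolding \<alpha>_def by (simp add: field_simps)
  have \<beta>0: "0 \<le> \<beta>" unfolding \<beta>_def using bounds m by (intro divide_nonneg_nonneg sum_nonneg) force+
  define A where "A = Sigma {0..<q} (\<lambda>x. {Mx x<..})"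
  define B where "B = Sigma {0..<q} (\<lambda>x. {mx x<..Mx x})"
  have A_sets: "A \<in> sets ?S" unfolding A_def by (rule sets_seed_Sigma) auto
  have B_sets: "B \<in> sets ?S" unfolding B_def by (rule sets_seed_Sigma) auto
  have A_eq: "emeasure ?S A = ennreal \<alpha>"
  proof -
    have "emeasure ?S A = ennreal ((\<Sum>x<q. 1 - Mx x)/q)" unfolding A_def
    proof (rule emeasure_seed_Sigma[OF q])
      fix x assume x: "x < q"
      have "{0..1} \<inter> {Mx x<..} = {Mx x<..1}" using bounds[OF x, of 0] m by auto
      then show "emeasure lborel ({0..1} \<inter> {Mx x<..}) = ennreal (1 - Mx x)"
        using bounds[OF x, of 0] m by simp
      show "0 \<le> 1 - Mx x" using bounds[OF x, of 0] m by simp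
    qed auto
    also have "(\<Sum>x<q. 1 - Mx x)/q = \<alpha>" unfolding \<alpha>_def using qpos
      by (simp add: sum_subtractf field_simps)
    finally show ?thesis .
  qed
  have B_eq: "emeasure ?S B = ennreal \<beta>"
    unfolding B_def \<beta>_def
  proof (rule emeasure_seed_Sigma[OF q])
    fix x assume x: "x < q"
    have "{0..1} \<inter> {mx x<..Mx x} = {mx x<..Mx x}" using bounds[OF x, of 0] m by auto
    then show "emeasure lborel ({0..1} \<inter> {mx x<..Mx x}) = ennreal (Mx x - mx x)"
      using bounds[OF x, of 0] m by simp
    show "0 \<le> Mx x - mx x" using bounds[OF x, of 0] m by simp
  qed auto
  have probS: "prob_space ?S" by (rule prob_S[OF q])
  interpret PP: product_prob_space "\<lambda>_. ?S" UNIV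
    by (rule product_prob_spaceI) (rule probS)
  define E where "E k = prod_emb (UNIV::nat set) (\<lambda>_. ?S) {..k} (\<Pi>\<^sub>E j\<in>{..k}. if j < k then A else B)" for k
  have E_sets: "E k \<in> sets ?P" for k
    unfolding E_def seed_measure_def using A_sets B_sets by (intro sets_PiM_I) auto
  have E_eq: "emeasure ?P (E k) = ennreal (\<alpha>^k * \<beta>)" for k
  proof -
    have "emeasure ?P (E k) = (\<Prod>j\<in>{..k}. emeasure ?S (if j < k then A else B))"
      unfolding E_def seed_measure_def
      by (rule emeasure_PiM_emb) (use probS A_sets B_sets in auto)
    also have "\<dots> = (\<Prod>j\<in>{..<k}. emeasure ?S (if j < k then A else B)) * emeasure ?S B"
      by (simp flip: lessThan_Suc_atMost)
    also have "(\<Prod>j\<in>{..<k}. emeasure ?S (if j < k then A else B)) = (\<Prod>j\<in>{..<k}. ennreal \<alpha>)"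
      by (rule prod.cong) (auto simp: A_eq)
    finally show ?thesis using \<alpha>0 \<beta>0
      by (simp add: B_eq ennreal_power ennreal_mult)
  qed
  have sub: "bad \<subseteq> (\<Union>k. E k)"
  proof
    fix r assume "r \<in> bad"
    then obtain i j where r: "r \<in> space ?P" and ij: "i < m" "j < m"
      and neq: "MinCoupler (\<mu> i) r \<noteq> MinCoupler (\<mu> j) r"
      unfolding bad_def by blast
    have sp: "fst (r k) < q" for k
      using r unfolding seed_measure_def seed_pair_measure_def
      by (fastforce simp: space_PiM PiE_iff space_pair_measure space_uniform_count_measure mem_Times_iff)
    let ?Q = "\<lambda>k. snd (r k) \<le> Mx (fst (r k))"
    show "r \<in> (\<Union>k. E k)"
    proof (cases "\<exists>k. ?Q k")
      case True
      define k where "k = (LEAST k. ?Q k)"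
      have Qk: "?Q k" unfolding k_def using True by (rule LeastI_ex)
      have before: "\<not> ?Q k'" if "k' < k" for k'
        using that unfolding k_def by (rule not_less_Least)
      show ?thesis
      proof (cases "snd (r k) \<le> mx (fst (r k))")
        case True
        have all: "MinCoupler (\<mu> l) r = fst (r k)" if l: "l < m" for l
        proof -
          have "(LEAST k'. snd (r k') \<le> \<mu> l (fst (r k'))) = k"
          proof (rule Least_equality)
            show "snd (r k) \<le> \<mu> l (fst (r k))" using True bounds[OF sp l, of k] by linarith
          next
            fix y assume y: "snd (r y) \<le> \<mu> l (fst (r y))"
            show "k \<le> y"
            proof (rule ccontr)
              assume "\<not> k \<le> y"
              then have "\<not> ?Q y" using before by simp
              then show False using y bounds[OF sp l, of y] by linarith
            qed
          qed
          then show ?thesis unfolding MinCoupler_def by simp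
        qed
        then show ?thesis using neq ij by simp
      next
        case False
        have "r \<in> E k"
          unfolding E_def prod_emb_iff
        proof (intro conjI)
          show "r \<in> extensional UNIV" by simp
          show "\<forall>i\<in>UNIV. r i \<in> space ?S"
            using r unfolding seed_measure_def by (auto simp: space_PiM PiE_iff)
          show "restrict r {..k} \<in> (\<Pi>\<^sub>E j\<in>{..k}. if j < k then A else B)"
          proof (auto simp: PiE_iff)
            fix j assume "j < k"
            then show "r j \<in> A" using before[of j] sp[of j] unfolding A_def mem_Sigma_iff' by simp
          next
            show "r k \<in> B" using False Qk sp[of k] unfolding B_def mem_Sigma_iff' by simp
          qed
        qed
        then show ?thesis by blast
      qed
    next
      case False
      have all: "(\<lambda>k'. snd (r k') \<le> \<mu> l (fst (r k'))) = (\<lambda>_. False)" if l: "l < m" for l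
      proof
        fix k'
        show "(snd (r k') \<le> \<mu> l (fst (r k'))) = False"
        proof -
          have "\<not> snd (r k') \<le> Mx (fst (r k'))" using False by blast
          then show ?thesis using bounds[OF sp l, of k'] by auto
        qed
      qed
      have "MinCoupler (\<mu> i) r = MinCoupler (\<mu> j) r"
        unfolding MinCoupler_def all[OF ij(1)] all[OF ij(2)] ..
      with neq show ?thesis by simp
    qed
  qed
  have sums: "(\<lambda>k. \<alpha>^k * \<beta>) sums (1/(1-\<alpha>) * \<beta>)"
    by (rule sums_mult2, rule geometric_sums) (use \<alpha>0 \<alpha>1 in simp)
  have "emeasure ?P bad \<le> emeasure ?P (\<Union>k. E k)"
    by (rule emeasure_mono[OF sub]) (use E_sets in auto)
  also have "\<dots> \<le> (\<Sum>k. emeasure ?P (E k))"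
    by (rule emeasure_subadditive_countably) (use E_sets in auto)
  also have "\<dots> = ennreal (\<Sum>k. \<alpha>^k * \<beta>)"
    unfolding E_eq using sums \<alpha>0 \<beta>0 by (intro suminf_ennreal2) (auto simp: sums_summable)
  also have "(\<Sum>k. \<alpha>^k * \<beta>) = \<beta> / (1 - \<alpha>)"
    using sums_unique[OF sums] by simp
  also have "\<beta> / (1 - \<alpha>) = (\<Sum>x<q. Mx x - mx x) / (\<Sum>x<q. Mx x)"
    unfolding \<alpha>_def \<beta>_def using qpos sumM1 by (simp add: field_simps)
  finally have le: "emeasure ?P bad \<le> ennreal ((\<Sum>x<q. Mx x - mx x) / (\<Sum>x<q. Mx x))" .
  have "measure ?P bad \<le> (\<Sum>x<q. Mx x - mx x) / (\<Sum>x<q. Mx x)"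
  proof -
    have nn: "0 \<le> (\<Sum>x<q. Mx x - mx x) / (\<Sum>x<q. Mx x)"
      using \<beta>0 sumM1 qpos unfolding \<beta>_def by (simp add: divide_nonneg_nonneg zero_le_divide_iff)
    have "ennreal (measure ?P bad) \<le> ennreal ((\<Sum>x<q. Mx x - mx x) / (\<Sum>x<q. Mx x))"
    proof -
      have eqm: "emeasure ?P bad = ennreal (measure ?P bad)"
        unfolding seed_measure_def by (rule PP.P.emeasure_eq_measure)
      show ?thesis using le unfolding eqm .
    qed
    then show ?thesis using nn by (simp add: ennreal_le_iff)
  qed
  with bad_sets have fin: "bad \<in> sets ?P \<and> measure ?P bad \<le> (\<Sum>x<q. Mx x - mx x) / (\<Sum>x<q. Mx x)"
    by (rule conjI)
  show ?thesis using fin unfolding bad_def Mx_def mx_def .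
qed

end
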